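(* Let $G$ be a complete $k$-partite graph ($k\ge 3$) on $n$ vertices with parts $V_1,\dots,V_k$, and let $w_0$ be any initial weighting. Then $S_{w_0}(i)=0$ for all but exactly one index $i$, and $$\mathcal{RC}(G,w_0)=n+S_{w_0}-1,\qquad\text{where } S_{w_0}=\sum_{i=1}^k S_{w_0}(i)=\max_{1\le i\le k}S_{w_0}(i).$$
   Context: Robot crawler model: let $G=(V,E)$ be a finite connected simple graph with $|V|=n$. An initial weighting is a bijection $w_0:V\to\{-n,-n+1,\dots,-1\}$. At time $1$ the crawler visits $w_0^{-1}(-n)$. If the crawler visits vertex $v$ at time $t$, then $w_t(v)=t$ and $w_t(u)=w_{t-1}(u)$ for all $u\neq v$. If $\min_{y\in V}w_t(y)>0$, the process stops and $\mathcal{RC}(G,w_0):=t$. Otherwise, at time $t+1$ the crawler moves to the neighbour $u$ of $v$ minimising $w_t(u)$. A vertex is "cleaned" at the first time it is visited. A complete $k$-partite graph with parts $V_1,\dots,V_k$ has an edge between $u$ and $v$ iff they lie in different parts. The surplus $S_{w_0}(i)$ of part $V_i$ is the number of not-yet-cleaned vertices of $V_i$ at the first moment when all vertices of $V\setminus V_i$ have been cleaned (and $0$ if $V_i$ is fully cleaned by then). *)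

theory Defs
  imports Main
begin

text \<open>Robot crawler on a graph with vertex set V and (symmetric) adjacency E.
  crawl V E w0 t = (vertex visited at time t, weighting w_t), for t \<ge> 1;
  at t = 0 the weighting is w0 (position meaningless).\<close>

fun crawl :: "'a set \<Rightarrow> ('a \<Rightarrow> 'a \<Rightarrow> bool) \<Rightarrow> ('a \<Rightarrow> int) \<Rightarrow> nat \<Rightarrow> 'a \<times> ('a \<Rightarrow> int)" where
  "crawl V E w0 0 = (undefined, w0)"
| "crawl V E w0 (Suc t) =
     (let p = fst (crawl V E w0 t); w = snd (crawl V E w0 t);
          p' = (if t = 0 then (THE v. v \<in> V \<and> w0 v = - int (card V))
                else (THE u. E p u \<and> (\<forall>u'. E p u' \<and> u' \<noteq> u \<longrightarrow> w u < w u')))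
      in (p', w(p' := int (Suc t))))"

definition crawler_pos :: "'a set \<Rightarrow> ('a \<Rightarrow> 'a \<Rightarrow> bool) \<Rightarrow> ('a \<Rightarrow> int) \<Rightarrow> nat \<Rightarrow> 'a" where
  "crawler_pos V E w0 t = fst (crawl V E w0 t)"

definition crawler_weight :: "'a set \<Rightarrow> ('a \<Rightarrow> 'a \<Rightarrow> bool) \<Rightarrow> ('a \<Rightarrow> int) \<Rightarrow> nat \<Rightarrow> 'a \<Rightarrow> int" where
  "crawler_weight V E w0 t = snd (crawl V E w0 t)"

definition crawler_stops_at :: "'a set \<Rightarrow> ('a \<Rightarrow> 'a \<Rightarrow> bool) \<Rightarrow> ('a \<Rightarrow> int) \<Rightarrow> nat \<Rightarrow> bool" where
  "crawler_stops_at V E w0 t \<longleftrightarrow> 1 \<le> t \<and> (\<forall>y\<in>V. crawler_weight V E w0 t y > 0)"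

definition RC :: "'a set \<Rightarrow> ('a \<Rightarrow> 'a \<Rightarrow> bool) \<Rightarrow> ('a \<Rightarrow> int) \<Rightarrow> nat" where
  "RC V E w0 = (LEAST t. crawler_stops_at V E w0 t)"

definition cleaned :: "'a set \<Rightarrow> ('a \<Rightarrow> 'a \<Rightarrow> bool) \<Rightarrow> ('a \<Rightarrow> int) \<Rightarrow> nat \<Rightarrow> 'a \<Rightarrow> bool" where
  "cleaned V E w0 t v \<longleftrightarrow> (\<exists>s\<in>{1..t}. crawler_pos V E w0 s = v)"

definition initial_weighting :: "'a set \<Rightarrow> ('a \<Rightarrow> int) \<Rightarrow> bool" where
  "initial_weighting V w0 \<longleftrightarrow> bij_betw w0 V {- int (card V) .. -1}"

definition multipartite_parts :: "'a set \<Rightarrow> nat \<Rightarrow> (nat \<Rightarrow> 'a set) \<Rightarrow> bool" where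
  "multipartite_parts V k P \<longleftrightarrow>
     (\<forall>i\<in>{1..k}. P i \<noteq> {}) \<and>
     (\<forall>i\<in>{1..k}. \<forall>j\<in>{1..k}. i \<noteq> j \<longrightarrow> P i \<inter> P j = {}) \<and>
     (\<Union>i\<in>{1..k}. P i) = V"

definition multipartite_adj :: "nat \<Rightarrow> (nat \<Rightarrow> 'a set) \<Rightarrow> 'a \<Rightarrow> 'a \<Rightarrow> bool" where
  "multipartite_adj k P u v \<longleftrightarrow>
     (\<exists>i\<in>{1..k}. \<exists>j\<in>{1..k}. i \<noteq> j \<and> u \<in> P i \<and> v \<in> P j)"

definition surplus :: "'a set \<Rightarrow> nat \<Rightarrow> (nat \<Rightarrow> 'a set) \<Rightarrow> ('a \<Rightarrow> int) \<Rightarrow> nat \<Rightarrow> nat" where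
  "surplus V k P w0 i =
     (let E = multipartite_adj k P;
          T = (LEAST t. \<forall>v \<in> V - P i. cleaned V E w0 t v)
      in card {v \<in> P i. \<not> cleaned V E w0 T v})"

end

theory Submission imports Defs begin

lemma the_argmin:
  fixes w :: "'a \<Rightarrow> int"
  assumes "finite {u. Q u}" "{u. Q u} \<noteq> {}" "inj_on w {u. Q u}"
  shows "Q (THE u. Q u \<and> (\<forall>u'. Q u' \<and> u' \<noteq> u \<longrightarrow> w u < w u'))
     \<and> (\<forall>u'. Q u' \<and> u' \<noteq> (THE u. Q u \<and> (\<forall>u'. Q u' \<and> u' \<noteq> u \<longrightarrow> w u < w u'))
          \<longrightarrow> w (THE u. Q u \<and> (\<forall>u'. Q u' \<and> u' \<noteq> u \<longrightarrow> w u < w u')) < w u')"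
proof -
  let ?N = "{u. Q u}"
  have "Min (w ` ?N) \<in> w ` ?N" using assms by (intro Min_in) auto
  then obtain m where m: "Q m" "w m = Min (w ` ?N)" by auto
  have mm: "\<forall>u'. Q u' \<and> u' \<noteq> m \<longrightarrow> w m < w u'"
  proof (intro allI impI)
    fix u' assume u': "Q u' \<and> u' \<noteq> m"
    have "w m \<le> w u'" using m assms(1) u' by auto
    moreover have "w u' \<noteq> w m" using assms(3) u' m(1) unfolding inj_on_def by auto
    ultimately show "w m < w u'" by simp
  qed
  have "\<exists>!u. Q u \<and> (\<forall>u'. Q u' \<and> u' \<noteq> u \<longrightarrow> w u < w u')"
  proof (rule ex1I[of _ m])
    show "Q m \<and> (\<forall>u'. Q u' \<and> u' \<noteq> m \<longrightarrow> w m < w u')" using m mm by blast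
  next
    fix u assume "Q u \<and> (\<forall>u'. Q u' \<and> u' \<noteq> u \<longrightarrow> w u < w u')"
    then show "u = m" using mm m(1) by force
  qed
  from theI'[OF this] show ?thesis by blast
qed

locale crawl_setup =
  fixes V :: "'a set" and k :: nat and P :: "nat \<Rightarrow> 'a set" and w0 :: "'a \<Rightarrow> int"
  assumes finV: "finite V" and k3: "k \<ge> 3" and parts: "multipartite_parts V k P"
    and iw: "initial_weighting V w0"
begin

abbreviation "E \<equiv> multipartite_adj k P"
abbreviation "n \<equiv> card V"
abbreviation pos :: "nat \<Rightarrow> 'a" where "pos t \<equiv> crawler_pos V E w0 t"
abbreviation wt :: "nat \<Rightarrow> 'a \<Rightarrow> int" where "wt t \<equiv> crawler_weight V E w0 t"
abbreviation cl :: "nat \<Rightarrow> 'a \<Rightarrow> bool" where "cl t v \<equiv> cleaned V E w0 t v"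
definition D :: "nat \<Rightarrow> 'a set" where "D t = {v\<in>V. \<not> cl t v}"
definition sp :: "'a \<Rightarrow> 'a \<Rightarrow> bool" where "sp u v \<longleftrightarrow> (\<exists>i\<in>{1..k}. u \<in> P i \<and> v \<in> P i)"

lemma parts_ne: "\<forall>i\<in>{1..k}. P i \<noteq> {}"
  using parts unfolding multipartite_parts_def by (elim conjE)
lemma parts_disj: "\<forall>i\<in>{1..k}. \<forall>j\<in>{1..k}. i \<noteq> j \<longrightarrow> P i \<inter> P j = {}"
  using parts unfolding multipartite_parts_def by (elim conjE)
lemma parts_un: "(\<Union>i\<in>{1..k}. P i) = V"
  using parts unfolding multipartite_parts_def by (elim conjE)

lemma P_sub: "i \<in> {1..k} \<Longrightarrow> P i \<subseteq> V"
  using parts_un by auto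
lemma P_ne: "i \<in> {1..k} \<Longrightarrow> P i \<noteq> {}"
  using parts_ne by auto
lemma part_unique: assumes "i \<in> {1..k}" "j \<in> {1..k}" "v \<in> P i" "v \<in> P j" shows "i = j"
proof (rule ccontr)
  assume "i \<noteq> j"
  then have "P i \<inter> P j = {}" using parts_disj assms(1,2) by auto
  then show False using assms(3,4) by auto
qed
lemma in_part: "v \<in> V \<Longrightarrow> \<exists>i\<in>{1..k}. v \<in> P i"
  using parts_un by auto

lemma sp_refl: "v \<in> V \<Longrightarrow> sp v v" using in_part unfolding sp_def by auto
lemma sp_sym: "sp u v \<Longrightarrow> sp v u" unfolding sp_def by auto
lemma sp_trans: assumes "sp u v" "sp v w" shows "sp u w"
proof -
  obtain i where i: "i \<in> {1..k}" "u \<in> P i" "v \<in> P i" using assms(1) unfolding sp_def by auto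
  obtain j where j: "j \<in> {1..k}" "v \<in> P j" "w \<in> P j" using assms(2) unfolding sp_def by auto
  have "i = j" using part_unique[OF i(1) j(1) i(3) j(2)] .
  then show ?thesis using i j unfolding sp_def by auto
qed
lemma sp_V: "sp u v \<Longrightarrow> u \<in> V \<and> v \<in> V" unfolding sp_def using P_sub by blast
lemma sp_iff_part: assumes "i \<in> {1..k}" "c \<in> P i" shows "sp c v \<longleftrightarrow> v \<in> P i"
proof
  assume "sp c v"
  then obtain j where j: "j \<in> {1..k}" "c \<in> P j" "v \<in> P j" unfolding sp_def by auto
  then show "v \<in> P i" using part_unique[OF assms(1) j(1) assms(2) j(2)] by simp
next
  assume "v \<in> P i" then show "sp c v" using assms unfolding sp_def by auto
qed

lemma E_iff: "E u v \<longleftrightarrow> u \<in> V \<and> v \<in> V \<and> \<not> sp u v"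
proof
  assume "E u v"
  then obtain i j where ij: "i \<in> {1..k}" "j \<in> {1..k}" "i \<noteq> j" "u \<in> P i" "v \<in> P j"
    unfolding multipartite_adj_def by auto
  have "\<not> sp u v"
  proof
    assume "sp u v"
    then have "v \<in> P i" using sp_iff_part[OF ij(1) ij(4)] by simp
    then show False using part_unique[OF ij(1) ij(2) _ ij(5)] ij(3) by simp
  qed
  then show "u \<in> V \<and> v \<in> V \<and> \<not> sp u v" using ij P_sub by auto
next
  assume a: "u \<in> V \<and> v \<in> V \<and> \<not> sp u v"
  obtain i where i: "i \<in> {1..k}" "u \<in> P i" using in_part[of u] a by blast
  obtain j where j: "j \<in> {1..k}" "v \<in> P j" using in_part[of v] a by blast
  have "i \<noteq> j"
  proof
    assume "i = j" then have "sp u v" using i j unfolding sp_def by auto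
    then show False using a by simp
  qed
  then show "E u v" unfolding multipartite_adj_def using i j by blast
qed

lemma other: assumes "u \<in> V" shows "\<exists>v\<in>V. \<not> sp u v"
proof -
  obtain i where i: "i \<in> {1..k}" "u \<in> P i" using in_part assms by blast
  define j where "j = (if i = 1 then 2 else 1::nat)"
  have j: "j \<in> {1..k}" "j \<noteq> i" using k3 i(1) unfolding j_def by auto
  then obtain v where "v \<in> P j" using P_ne by blast
  then show ?thesis using P_sub j i sp_iff_part[OF i] part_unique by blast
qed

lemma wt_0: "wt 0 = w0" by (simp add: crawler_weight_def)
lemma pos_1: "pos (Suc 0) = (THE v. v \<in> V \<and> w0 v = - int n)"
  by (simp add: crawler_pos_def Let_def)
lemma pos_Suc: "t \<noteq> 0 \<Longrightarrow> pos (Suc t) =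
   (THE u. E (pos t) u \<and> (\<forall>u'. E (pos t) u' \<and> u' \<noteq> u \<longrightarrow> wt t u < wt t u'))"
  by (simp add: crawler_pos_def crawler_weight_def Let_def)
lemma wt_Suc: "wt (Suc t) = (wt t)(pos (Suc t) := int (Suc t))"
  by (simp add: crawler_pos_def crawler_weight_def Let_def)
lemma cl_0: "\<not> cl 0 v" by (simp add: cleaned_def)
lemma cl_Suc: "cl (Suc t) v \<longleftrightarrow> cl t v \<or> pos (Suc t) = v"
  by (auto simp: cleaned_def atLeastAtMostSuc_conv)

lemma w0_V: "v \<in> V \<Longrightarrow> w0 v \<in> {- int n .. -1}"
  using iw unfolding initial_weighting_def bij_betw_def by blast


lemma V_ne: "V \<noteq> {}" using P_ne P_sub k3 by fastforce
lemma n_pos: "n \<ge> 1" using V_ne finV by (simp add: Suc_le_eq card_gt_0_iff)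

lemma pos1_V: "pos (Suc 0) \<in> V"
proof -
  have "- int n \<in> {- int n .. -1}" using n_pos by simp
  then obtain v where v: "v \<in> V" "w0 v = - int n"
    using iw unfolding initial_weighting_def bij_betw_def by (metis imageE)
  have inj: "inj_on w0 V" using iw unfolding initial_weighting_def bij_betw_def by blast
  have "\<exists>!v. v \<in> V \<and> w0 v = - int n"
  proof (rule ex1I[of _ v])
    show "v \<in> V \<and> w0 v = - int n" using v by simp
  next
    fix y assume "y \<in> V \<and> w0 y = - int n"
    then show "y = v" using v inj unfolding inj_on_def by auto
  qed
  from theI'[OF this] show ?thesis unfolding pos_1 by blast
qed

definition inv :: "nat \<Rightarrow> bool" where
  "inv t \<longleftrightarrow> (\<forall>v\<in>V. (cl t v \<longrightarrow> 0 < wt t v \<and> wt t v \<le> int t) \<and> (\<not> cl t v \<longrightarrow> wt t v = w0 v))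
      \<and> inj_on (wt t) V \<and> (t \<noteq> 0 \<longrightarrow> pos t \<in> V)"

lemma step_min:
  assumes "t \<noteq> 0" "inv t"
  shows "E (pos t) (pos (Suc t)) \<and> (\<forall>u'. E (pos t) u' \<and> u' \<noteq> pos (Suc t) \<longrightarrow> wt t (pos (Suc t)) < wt t u')"
proof -
  have pV: "pos t \<in> V" using assms unfolding inv_def by blast
  have sub: "{u. E (pos t) u} \<subseteq> V" using E_iff by blast
  have "finite {u. E (pos t) u}" using finite_subset[OF sub finV] .
  moreover have "{u. E (pos t) u} \<noteq> {}" using other[OF pV] E_iff pV by blast
  moreover have "inj_on (wt t) {u. E (pos t) u}"
    using assms(2) sub unfolding inv_def by (meson inj_on_subset)
  ultimately show ?thesis using the_argmin[of "E (pos t)" "wt t"] pos_Suc[OF assms(1)] by simp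
qed

lemma inv_all: "inv t"
proof (induction t)
  case 0
  then show ?case using iw unfolding inv_def initial_weighting_def bij_betw_def
    by (simp add: cl_0 wt_0)
next
  case (Suc t)
  define p where "p = pos (Suc t)"
  have pV: "p \<in> V"
  proof (cases "t = 0")
    case True then show ?thesis using pos1_V p_def by simp
  next
    case False then show ?thesis using step_min[OF False Suc.IH] E_iff p_def by blast
  qed
  have le: "\<forall>v\<in>V. wt t v \<le> int t"
  proof
    fix v assume v: "v \<in> V"
    show "wt t v \<le> int t"
    proof (cases "cl t v")
      case True then show ?thesis using Suc.IH v unfolding inv_def by blast
    next
      case False then show ?thesis using Suc.IH v w0_V[OF v] unfolding inv_def by force
    qed
  qed
  have inj: "inj_on (wt (Suc t)) V"
    unfolding wt_Suc
  proof (rule inj_on_fun_updI)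
    show "inj_on (wt t) V" using Suc.IH unfolding inv_def by blast
    show "int (Suc t) \<notin> wt t ` V" using le by force
  qed
  have vals: "\<forall>v\<in>V. (cl (Suc t) v \<longrightarrow> 0 < wt (Suc t) v \<and> wt (Suc t) v \<le> int (Suc t))
         \<and> (\<not> cl (Suc t) v \<longrightarrow> wt (Suc t) v = w0 v)"
  proof
    fix v assume v: "v \<in> V"
    show "(cl (Suc t) v \<longrightarrow> 0 < wt (Suc t) v \<and> wt (Suc t) v \<le> int (Suc t))
         \<and> (\<not> cl (Suc t) v \<longrightarrow> wt (Suc t) v = w0 v)"
    proof (cases "v = p")
      case True then show ?thesis unfolding wt_Suc p_def cl_Suc by simp
    next
      case False
      then have "wt (Suc t) v = wt t v" "cl (Suc t) v = cl t v"
        unfolding wt_Suc cl_Suc p_def by auto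
      then show ?thesis using Suc.IH v unfolding inv_def by force
    qed
  qed
  have "pos (Suc t) \<in> V" using pV p_def by simp
  then show ?case unfolding inv_def by (rule conjI[OF vals conjI[OF inj impI]])
qed

lemma pos_V: "t \<noteq> 0 \<Longrightarrow> pos t \<in> V" using inv_all unfolding inv_def by blast
lemma dirty_neg: "v \<in> V \<Longrightarrow> \<not> cl t v \<Longrightarrow> wt t v < 0"
  using inv_all[of t] w0_V[of v] unfolding inv_def by force
lemma clean_pos: "v \<in> V \<Longrightarrow> cl t v \<Longrightarrow> wt t v > 0"
  using inv_all[of t] unfolding inv_def by blast

lemma D_sub: "D t \<subseteq> V" unfolding D_def by blast
lemma D_fin: "finite (D t)" using finite_subset[OF D_sub finV] .
lemma D_0: "D 0 = V" unfolding D_def by (simp add: cl_0)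
lemma D_Suc: "D (Suc t) = D t - {pos (Suc t)}" unfolding D_def cl_Suc by auto
lemma D_mono: "t \<le> t' \<Longrightarrow> D t' \<subseteq> D t"
  by (rule lift_Suc_antimono_le[of D]) (auto simp: D_Suc)

lemma adj_next: "t \<noteq> 0 \<Longrightarrow> pos (Suc t) \<in> V \<and> \<not> sp (pos t) (pos (Suc t))"
  using step_min[OF _ inv_all] E_iff by blast

lemma progress:
  assumes "t \<noteq> 0" "v \<in> D t" "\<not> sp (pos t) v"
  shows "pos (Suc t) \<in> D t"
proof -
  have vV: "v \<in> V" and vd: "\<not> cl t v" using assms(2) unfolding D_def by auto
  have E: "E (pos t) v" using E_iff pos_V[OF assms(1)] vV assms(3) by blast
  have pV: "pos (Suc t) \<in> V" using adj_next[OF assms(1)] by blast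
  show ?thesis
  proof (cases "v = pos (Suc t)")
    case True then show ?thesis using assms(2) by simp
  next
    case False
    then have "wt t (pos (Suc t)) < wt t v" using step_min[OF assms(1) inv_all] E by blast
    also have "\<dots> < 0" using dirty_neg[OF vV vd] .
    finally have "\<not> cl t (pos (Suc t))" using clean_pos[OF pV] by force
    then show ?thesis using pV unfolding D_def by blast
  qed
qed

lemma stops_iff: "crawler_stops_at V E w0 t \<longleftrightarrow> 1 \<le> t \<and> D t = {}"
proof -
  have "(\<forall>y\<in>V. wt t y > 0) \<longleftrightarrow> (\<forall>y\<in>V. cl t y)"
    using dirty_neg clean_pos by force
  then show ?thesis unfolding crawler_stops_at_def crawler_weight_def D_def by auto
qed


definition good :: "nat \<Rightarrow> bool" where "good t \<longleftrightarrow> (\<forall>v\<in>D t. sp (pos t) v)"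

lemma phase1: "(\<forall>s. 1 \<le> s \<longrightarrow> s < Suc t \<longrightarrow> \<not> good s) \<Longrightarrow> card (D (Suc t)) + Suc t = n"
proof (induction t)
  case 0
  have "D (Suc 0) = V - {pos (Suc 0)}" using D_Suc D_0 by simp
  then have "card (D (Suc 0)) = n - 1" using pos1_V finV by simp
  then show ?case using n_pos by simp
next
  case (Suc t)
  have IH: "card (D (Suc t)) + Suc t = n" using Suc.IH Suc.prems by simp
  have "\<not> good (Suc t)" using Suc.prems by simp
  then obtain v where v: "v \<in> D (Suc t)" "\<not> sp (pos (Suc t)) v" unfolding good_def by blast
  have p: "pos (Suc (Suc t)) \<in> D (Suc t)" using progress[OF _ v] by simp
  have "card (D (Suc (Suc t))) = card (D (Suc t)) - 1"
    unfolding D_Suc[of "Suc t"] using p D_fin by simp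
  moreover have "card (D (Suc t)) \<ge> 1" using p D_fin by (metis One_nat_def Suc_leI card_gt_0_iff empty_iff)
  ultimately show ?case using IH by simp
qed

lemma ex_good: "\<exists>s. 1 \<le> s \<and> good s"
proof (rule ccontr)
  assume "\<not> (\<exists>s. 1 \<le> s \<and> good s)"
  then have "card (D (Suc n)) + Suc n = n" using phase1[of n] by blast
  then show False by simp
qed

definition T0 :: nat where "T0 = (LEAST s. 1 \<le> s \<and> good s)"

lemma T0_props: "1 \<le> T0" "good T0" "\<And>s. 1 \<le> s \<Longrightarrow> s < T0 \<Longrightarrow> \<not> good s"
proof -
  show "1 \<le> T0" "good T0" unfolding T0_def using LeastI_ex[OF ex_good] by auto
  fix s assume "1 \<le> s" "s < T0"
  then show "\<not> good s" unfolding T0_def using not_less_Least by blast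
qed

lemma card_before: "1 \<le> s \<Longrightarrow> s \<le> T0 \<Longrightarrow> card (D s) + s = n"
proof -
  assume a: "1 \<le> s" "s \<le> T0"
  then obtain t where t: "s = Suc t" by (cases s) auto
  have "\<forall>s'. 1 \<le> s' \<longrightarrow> s' < Suc t \<longrightarrow> \<not> good s'" using T0_props(3) a t by auto
  then show ?thesis using phase1 t by blast
qed

lemma T0_ge2: "2 \<le> T0"
proof (rule ccontr)
  assume "\<not> 2 \<le> T0"
  then have T: "T0 = Suc 0" using T0_props(1) by simp
  obtain v where v: "v \<in> V" "\<not> sp (pos (Suc 0)) v" using other[OF pos1_V] by blast
  have "v \<noteq> pos (Suc 0)" using v sp_refl by blast
  then have "v \<in> D (Suc 0)" using D_Suc[of 0] D_0 v by simp
  then show False using T0_props(2) v T unfolding good_def by simp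
qed

abbreviation c where "c \<equiv> pos T0"
abbreviation m where "m \<equiv> card (D T0)"

lemma c_V: "c \<in> V" using pos_V T0_props(1) by simp

lemma n_eq: "m + T0 = n" using card_before[OF T0_props(1)] by simp

lemma Dm1: "\<forall>v\<in>D (T0 - 1). sp c v" "card (D (T0 - 1)) = m + 1"
proof -
  have e: "D T0 = D (T0 - 1) - {c}" using D_Suc[of "T0 - 1"] T0_props(1) by simp
  show "\<forall>v\<in>D (T0 - 1). sp c v"
  proof
    fix v assume v: "v \<in> D (T0 - 1)"
    show "sp c v"
    proof (cases "v = c")
      case True then show ?thesis using sp_refl c_V by simp
    next
      case False then show ?thesis using e v T0_props(2) unfolding good_def by auto
    qed
  qed
  have "card (D (T0 - 1)) + (T0 - 1) = n" using card_before[of "T0 - 1"] T0_ge2 by simp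
  then show "card (D (T0 - 1)) = m + 1" using n_eq T0_ge2 by simp
qed

lemma phase2: "i \<le> m \<Longrightarrow> card (D (T0 + 2*i)) = m - i \<and> sp c (pos (T0 + 2*i))
   \<and> (\<forall>v\<in>D (T0 + 2*i). sp c v) \<and> (\<forall>s. T0 \<le> s \<and> s < T0 + 2*i \<longrightarrow> D s \<noteq> {})"
proof (induction i)
  case 0
  then show ?case using T0_props(2) sp_refl c_V unfolding good_def by auto
next
  case (Suc i)
  define t where "t = T0 + 2*i"
  have IH: "card (D t) = m - i" "sp c (pos t)" "\<forall>v\<in>D t. sp c v"
     "\<forall>s. T0 \<le> s \<and> s < t \<longrightarrow> D s \<noteq> {}"
    using Suc t_def by auto
  have t0: "t \<noteq> 0" using T0_props(1) t_def by simp
  have ne: "D t \<noteq> {}" using IH(1) Suc.prems by auto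
  then obtain v where v: "v \<in> D t" by blast
  have an: "pos (Suc t) \<in> V" "\<not> sp (pos t) (pos (Suc t))" using adj_next[OF t0] by auto
  have nc: "\<not> sp c (pos (Suc t))"
  proof
    assume "sp c (pos (Suc t))"
    then have "sp (pos t) (pos (Suc t))" using sp_sym[OF IH(2)] sp_trans by blast
    then show False using an by simp
  qed
  have "pos (Suc t) \<notin> D t" using IH(3) nc by blast
  then have DS: "D (Suc t) = D t" using D_Suc by simp
  have "\<not> sp (pos (Suc t)) v"
  proof
    assume "sp (pos (Suc t)) v"
    then have "sp c (pos (Suc t))" using IH(3) v sp_sym sp_trans by blast
    then show False using nc by simp
  qed
  then have p2: "pos (Suc (Suc t)) \<in> D t" using progress[of "Suc t" v] v DS by simp
  have DSS: "D (Suc (Suc t)) = D t - {pos (Suc (Suc t))}" using D_Suc DS by simp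
  have tt: "T0 + 2 * Suc i = Suc (Suc t)" using t_def by simp
  have "card (D (Suc (Suc t))) = m - Suc i" using DSS p2 D_fin IH(1) by simp
  moreover have "sp c (pos (Suc (Suc t)))" using IH(3) p2 by blast
  moreover have "\<forall>v\<in>D (Suc (Suc t)). sp c v" using IH(3) DSS by blast
  moreover have "\<forall>s. T0 \<le> s \<and> s < Suc (Suc t) \<longrightarrow> D s \<noteq> {}"
  proof (intro allI impI)
    fix s assume s: "T0 \<le> s \<and> s < Suc (Suc t)"
    then have "s < t \<or> s = t \<or> s = Suc t" by auto
    then show "D s \<noteq> {}" using IH(4) s ne DS by auto
  qed
  ultimately show ?case unfolding tt by blast
qed

abbreviation R where "R \<equiv> T0 + 2 * m"

lemma D_R: "D R = {}" using phase2[of m] D_fin by simp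

lemma nonempty: "1 \<le> s \<Longrightarrow> s < R \<Longrightarrow> D s \<noteq> {}"
proof -
  assume s: "1 \<le> s" "s < R"
  show "D s \<noteq> {}"
  proof (cases "s < T0")
    case True
    then have "card (D s) + s = n" using card_before s by simp
    then have "card (D s) > 0" using n_eq True by simp
    then show ?thesis by auto
  next
    case False then show ?thesis using phase2[of m] s by simp
  qed
qed

lemma RC_eq: "RC V E w0 = R"
  unfolding RC_def
proof (rule Least_equality)
  show "crawler_stops_at V E w0 R" using stops_iff D_R T0_props(1) by simp
next
  fix s assume "crawler_stops_at V E w0 s"
  then have "1 \<le> s" "D s = {}" using stops_iff by auto
  then show "R \<le> s" using nonempty by (meson not_le)
qed

lemma surplus_eq: "surplus V k P w0 i = card {v \<in> P i. \<not> cl (LEAST t. \<forall>v \<in> V - P i. cl t v) v}"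
  unfolding surplus_def Let_def by simp

lemma c_part: obtains jc where "jc \<in> {1..k}" "c \<in> P jc"
  using in_part[OF c_V] by blast

lemma surplus_main:
  assumes jc: "jc \<in> {1..k}" "c \<in> P jc"
  shows "surplus V k P w0 jc = m + 1"
proof -
  have spj: "\<And>v. sp c v \<longleftrightarrow> v \<in> P jc" using sp_iff_part[OF jc] .
  have L: "(LEAST t. \<forall>v \<in> V - P jc. cl t v) = T0 - 1"
  proof (rule Least_equality)
    show "\<forall>v \<in> V - P jc. cl (T0 - 1) v"
      using Dm1(1) spj unfolding D_def by blast
  next
    fix t assume a: "\<forall>v \<in> V - P jc. cl t v"
    then have Dt: "D t \<subseteq> P jc" unfolding D_def by blast
    show "T0 - 1 \<le> t"
    proof (rule ccontr)
      assume "\<not> T0 - 1 \<le> t"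
      then have lt: "Suc t < T0" by simp
      show False
      proof (cases "t = 0")
        case True
        obtain v where "v \<in> V" "\<not> sp c v" using other[OF c_V] by blast
        then show False using Dt True D_0 spj by blast
      next
        case False
        then have "\<not> good t" using T0_props(3) lt by simp
        then obtain v where v: "v \<in> D t" "\<not> sp (pos t) v" unfolding good_def by blast
        have p: "pos (Suc t) \<in> P jc" using progress[OF False v] Dt by blast
        have "good (Suc t)" unfolding good_def
        proof
          fix u assume "u \<in> D (Suc t)"
          then have "u \<in> P jc" using D_Suc Dt by blast
          then show "sp (pos (Suc t)) u" using p jc(1) unfolding sp_def by blast
        qed
        then show False using T0_props(3)[of "Suc t"] lt by simp
      qed
    qed
  qed
  have "{v \<in> P jc. \<not> cl (T0 - 1) v} = D (T0 - 1)"
    using Dm1(1) spj P_sub[OF jc(1)] unfolding D_def by blast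
  then show ?thesis unfolding surplus_eq L using Dm1(2) by simp
qed

lemma surplus_other:
  assumes jc: "jc \<in> {1..k}" "c \<in> P jc" and i: "i \<in> {1..k}" "i \<noteq> jc"
  shows "surplus V k P w0 i = 0"
proof -
  have spj: "\<And>v. sp c v \<longleftrightarrow> v \<in> P jc" using sp_iff_part[OF jc] .
  have "D (R - 1) \<noteq> {}" using nonempty T0_ge2 by simp
  then obtain z where z: "z \<in> D (R - 1)" by blast
  have "D (R - 1) \<subseteq> D (T0 - 1)" using D_mono by simp
  then have "z \<in> P jc" using z Dm1(1) spj by blast
  then have zi: "z \<in> V - P i" using part_unique[OF i(1) jc(1)] i(2) z D_sub by blast
  define T where "T = (LEAST t. \<forall>v \<in> V - P i. cl t v)"
  have ex: "\<exists>t. \<forall>v \<in> V - P i. cl t v" using D_R unfolding D_def by blast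
  have "cl T z" using LeastI_ex[OF ex] zi unfolding T_def by blast
  then have "\<not> T \<le> R - 1" using z D_mono[of T "R - 1"] unfolding D_def by blast
  then have "D T = {}" using D_mono[of R T] D_R by simp
  then have e: "{v \<in> P i. \<not> cl T v} = {}" using P_sub[OF i(1)] unfolding D_def by blast
  show ?thesis unfolding surplus_eq T_def[symmetric] e by simp
qed

lemma main:
  "(\<exists>!i. i \<in> {1..k} \<and> surplus V k P w0 i \<noteq> 0)
    \<and> (\<exists>t. crawler_stops_at V (multipartite_adj k P) w0 t)
    \<and> RC V (multipartite_adj k P) w0 = card V + (\<Sum>i\<in>{1..k}. surplus V k P w0 i) - 1
    \<and> (\<Sum>i\<in>{1..k}. surplus V k P w0 i) = Max ((surplus V k P w0) ` {1..k})"
proof -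
  obtain jc where jc: "jc \<in> {1..k}" "c \<in> P jc" using c_part by blast
  have sv: "\<And>i. i \<in> {1..k} \<Longrightarrow> surplus V k P w0 i = (if i = jc then m + 1 else 0)"
    using surplus_main[OF jc] surplus_other[OF jc] by auto
  have sum: "(\<Sum>i\<in>{1..k}. surplus V k P w0 i) = m + 1"
  proof -
    have "(\<Sum>i\<in>{1..k}. surplus V k P w0 i) = (\<Sum>i\<in>{1..k}. if i = jc then m + 1 else 0)"
      using sv by (rule sum.cong[OF refl])
    also have "\<dots> = m + 1" using jc(1) by (simp add: sum.delta)
    finally show ?thesis .
  qed
  have mx: "Max ((surplus V k P w0) ` {1..k}) = m + 1"
  proof (rule Max_eqI)
    show "finite (surplus V k P w0 ` {1..k})" by simp
    show "\<And>y. y \<in> surplus V k P w0 ` {1..k} \<Longrightarrow> y \<le> m + 1" using sv by auto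
    show "m + 1 \<in> surplus V k P w0 ` {1..k}" using sv jc(1) by force
  qed
  have u: "\<exists>!i. i \<in> {1..k} \<and> surplus V k P w0 i \<noteq> 0"
  proof (rule ex1I[of _ jc])
    show "jc \<in> {1..k} \<and> surplus V k P w0 jc \<noteq> 0" using sv jc(1) by simp
  next
    fix i assume a: "i \<in> {1..k} \<and> surplus V k P w0 i \<noteq> 0"
    then have "surplus V k P w0 i = (if i = jc then m + 1 else 0)" using sv by blast
    then show "i = jc" using a by (cases "i = jc") auto
  qed
  have st: "\<exists>t. crawler_stops_at V (multipartite_adj k P) w0 t"
    using stops_iff[of R] D_R T0_props(1) by auto
  have rc: "RC V (multipartite_adj k P) w0 = card V + (\<Sum>i\<in>{1..k}. surplus V k P w0 i) - 1"
    using RC_eq sum n_eq by simp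
  show ?thesis using u st rc sum mx by simp
qed

end

theorem mainTheorem4:
  fixes V :: "'a set" and k :: nat and P :: "nat \<Rightarrow> 'a set" and w0 :: "'a \<Rightarrow> int"
  assumes "finite V"
    and "k \<ge> 3"
    and "multipartite_parts V k P"
    and "initial_weighting V w0"
  shows "(\<exists>!i. i \<in> {1..k} \<and> surplus V k P w0 i \<noteq> 0)
    \<and> (\<exists>t. crawler_stops_at V (multipartite_adj k P) w0 t)
    \<and> RC V (multipartite_adj k P) w0 = card V + (\<Sum>i\<in>{1..k}. surplus V k P w0 i) - 1
    \<and> (\<Sum>i\<in>{1..k}. surplus V k P w0 i) = Max ((surplus V k P w0) ` {1..k})"
proof -
  interpret crawl_setup V k P w0 using assms by (simp add: crawl_setup_def)
  show ?thesis by (rule main)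
qed

end
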